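(* In the toy model (see context), let $S=\sum_{i=0}^{L-1}[\![\Delta\alpha_i]\!]$ and $\omega_i=\Delta\alpha_i-[\![\Delta\alpha_i]\!]$. Define an integer vector $\vec J$ by: if $S\ge0$, $J_i=1$ for the $S+1$ indices $i$ with the smallest values of $\omega_i$ and $J_i=0$ otherwise; if $S<0$, $J_i=-1$ for the $|S|-1$ indices $i$ with the largest values of $\omega_i$ and $J_i=0$ otherwise. Let $k^+\in\{0,\dots,L-1\}$ be given by $k^+\equiv\sum_{i=0}^{L-1}i\,(-[\![\Delta\alpha_i]\!]+J_i)\pmod L$. Then the almost surely unique (up to adding a common integer) threshold configuration $\vec m^+$ of the toy model satisfies $$\Delta m^+_i=-[\![\Delta\alpha_i]\!]+J_i-\delta_{ik^+}\quad\text{for all }i.$$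
   Context: Toy model: $L$ sites with periodic boundary conditions (indices mod $L$); disorder $\alpha_0,\dots,\alpha_{L-1}$ i.i.d. uniform on $(-\tfrac12,\tfrac12)$, extended periodically; $\Delta x_i=x_{i-1}-2x_i+x_{i+1}$ is the periodic discrete Laplacian; $[\![x]\!]$ denotes the integer nearest to $x$; $\delta_{ik}$ is the Kronecker delta. A configuration is $\vec m\in\mathbb Z^L$, with (rescaled, zero-force) well coordinates $z_i=\Delta m_i+\Delta\alpha_i$. A threshold configuration is a configuration $\vec m^+$ attaining $\min_{\vec m\in\mathbb Z^L}\max_i z_i$. *)

theory Defs
  imports "HOL-Analysis.Analysis"
begin

definition lap :: "nat \<Rightarrow> (nat \<Rightarrow> 'a::comm_ring_1) \<Rightarrow> nat \<Rightarrow> 'a" where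
  "lap L x i = x ((i + L - 1) mod L) - 2 * x (i mod L) + x ((i + 1) mod L)"

definition zcoord :: "nat \<Rightarrow> (nat \<Rightarrow> real) \<Rightarrow> (nat \<Rightarrow> int) \<Rightarrow> nat \<Rightarrow> real" where
  "zcoord L \<alpha> m i = real_of_int (lap L m i) + lap L \<alpha> i"

definition maxz :: "nat \<Rightarrow> (nat \<Rightarrow> real) \<Rightarrow> (nat \<Rightarrow> int) \<Rightarrow> real" where
  "maxz L \<alpha> m = Max {zcoord L \<alpha> m i | i. i < L}"

text \<open>Threshold configuration: attains the minimum over all configurations of max_i z_i.
  Configurations are m : nat => int, only the values on {0..<L} matter.\<close>
definition threshold_config :: "nat \<Rightarrow> (nat \<Rightarrow> real) \<Rightarrow> (nat \<Rightarrow> int) \<Rightarrow> bool" where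
  "threshold_config L \<alpha> m \<longleftrightarrow> (\<forall>m'. maxz L \<alpha> m \<le> maxz L \<alpha> m')"

definition rnd :: "nat \<Rightarrow> (nat \<Rightarrow> real) \<Rightarrow> nat \<Rightarrow> int" where
  "rnd L \<alpha> i = round (lap L \<alpha> i)"

definition omega :: "nat \<Rightarrow> (nat \<Rightarrow> real) \<Rightarrow> nat \<Rightarrow> real" where
  "omega L \<alpha> i = lap L \<alpha> i - real_of_int (rnd L \<alpha> i)"

definition Ssum :: "nat \<Rightarrow> (nat \<Rightarrow> real) \<Rightarrow> int" where
  "Ssum L \<alpha> = (\<Sum>i<L. rnd L \<alpha> i)"

text \<open>J: if S >= 0, J_i = 1 on the S+1 indices with smallest omega; if S < 0,
  J_i = -1 on the |S|-1 indices with largest omega (ties have probability zero).\<close>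
definition Jvec :: "nat \<Rightarrow> (nat \<Rightarrow> real) \<Rightarrow> nat \<Rightarrow> int" where
  "Jvec L \<alpha> i =
     (if Ssum L \<alpha> \<ge> 0 then
        (if int (card {j. j < L \<and> omega L \<alpha> j < omega L \<alpha> i}) < Ssum L \<alpha> + 1 then 1 else 0)
      else
        (if int (card {j. j < L \<and> omega L \<alpha> j > omega L \<alpha> i}) < \<bar>Ssum L \<alpha>\<bar> - 1 then -1 else 0))"

definition kplus :: "nat \<Rightarrow> (nat \<Rightarrow> real) \<Rightarrow> int" where
  "kplus L \<alpha> = (\<Sum>i<L. int i * (- rnd L \<alpha> i + Jvec L \<alpha> i)) mod int L"

definition disorder :: "nat \<Rightarrow> (nat \<Rightarrow> real) measure" where
  "disorder L = PiM {..<L} (\<lambda>_. uniform_measure lborel {-1/2<..<1/2})"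

end

theory Submission
  imports Defs "HOL-Probability.Probability_Measure"
begin


definition U :: "real measure" where "U = uniform_measure lborel {-1/2<..<1/2::real}"

lemma prob_U: "prob_space U"
  unfolding U_def by (rule prob_space_uniform_measure) auto

interpretation PU: product_sigma_finite "\<lambda>_::nat. U"
  unfolding product_sigma_finite_def using prob_space_imp_sigma_finite[OF prob_U] by simp

lemma U_single: "emeasure U {c} = 0"
proof -
  have "{-1/2<..<1/2::real} \<inter> {c} = (if c \<in> {-1/2<..<1/2} then {c} else {})" by auto
  then show ?thesis unfolding U_def by (subst emeasure_uniform_measure) auto
qed

lemma disorder_U: "disorder L = PiM {..<L} (\<lambda>_. U)"
  unfolding disorder_def U_def ..

lemma null_coord:
  assumes p: "p < L" and hm: "h \<in> borel_measurable (disorder L)"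
    and hinv: "\<And>\<alpha> t. h (\<alpha>(p:=t)) = h \<alpha>"
  shows "{\<alpha> \<in> space (disorder L). \<alpha> p = h \<alpha>} \<in> null_sets (disorder L)"
proof -
  let ?N = "{\<alpha> \<in> space (disorder L). \<alpha> p = h \<alpha>}"
  have hm': "h \<in> borel_measurable (PiM {..<L} (\<lambda>_. U))" using hm by (simp add: disorder_U)
  have Nm: "?N \<in> sets (PiM {..<L} (\<lambda>_. U))"
  proof -
    have cm: "(\<lambda>x. x p) \<in> borel_measurable (PiM {..<L} (\<lambda>_. U))"
    proof -
      have "(\<lambda>x. x p) \<in> measurable (PiM {..<L} (\<lambda>_. U)) U"
        using p by (intro measurable_component_singleton) simp
      moreover have "sets U = sets borel" by (simp add: U_def)
      ultimately show ?thesis using measurable_cong_sets[OF refl, of U borel] by blast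
    qed
    show ?thesis unfolding disorder_U by (rule measurable_equality_set[OF cm hm'])
  qed
  define I where "I = {..<L} - {p}"
  have ins: "{..<L} = insert p I" using p by (auto simp: I_def)
  have fI: "finite I" "p \<notin> I" by (auto simp: I_def)
  have "emeasure (PiM {..<L} (\<lambda>_. U)) ?N = (\<integral>\<^sup>+ x. indicator ?N x \<partial>(PiM {..<L} (\<lambda>_. U)))"
    using Nm by simp
  also have "\<dots> = (\<integral>\<^sup>+ x. (\<integral>\<^sup>+ y. indicator ?N (x(p := y)) \<partial>U) \<partial>(PiM I (\<lambda>_. U)))"
  proof -
    have im: "indicator ?N \<in> borel_measurable (PiM (insert p I) (\<lambda>_. U))"
      using Nm unfolding ins by (rule borel_measurable_indicator)
    have "integral\<^sup>N (PiM (insert p I) (\<lambda>_. U)) (indicator ?N) = (\<integral>\<^sup>+ x. (\<integral>\<^sup>+ y. indicator ?N (x(p := y)) \<partial>U) \<partial>(PiM I (\<lambda>_. U)))"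
      by (rule PU.product_nn_integral_insert[OF fI im])
    then show ?thesis by (simp only: ins)
  qed
  also have "\<dots> = (\<integral>\<^sup>+ x. 0 \<partial>(PiM I (\<lambda>_. U)))"
  proof (rule nn_integral_cong)
    fix x assume x: "x \<in> space (PiM I (\<lambda>_. U))"
    have "(\<integral>\<^sup>+ y. indicator ?N (x(p := y)) \<partial>U) = (\<integral>\<^sup>+ y. indicator {h (x(p:=0))} y \<partial>U)"
    proof (rule nn_integral_cong)
      fix y assume "y \<in> space U"
      have sp: "x(p := y) \<in> space (disorder L)"
        using x p unfolding disorder_U space_PiM by (auto simp: PiE_def extensional_def I_def U_def)
      have "h (x(p:=y)) = h ((x(p:=y))(p:=0))" by (rule hinv[symmetric])
      then have "h (x(p:=y)) = h (x(p:=0))" by simp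
      then show "indicator ?N (x(p := y)) = (indicator {h (x(p:=0))} y :: ennreal)"
        using sp by (auto simp: indicator_def)
    qed
    also have "\<dots> = 0" using U_single by (simp add: U_def)
    finally show "(\<integral>\<^sup>+ y. indicator ?N (x(p := y)) \<partial>U) = 0" .
  qed
  finally show ?thesis using Nm unfolding disorder_U by (intro null_setsI) simp_all
qed



definition nx :: "nat \<Rightarrow> nat \<Rightarrow> nat" where "nx L i = (i + 1) mod L"
definition pv :: "nat \<Rightarrow> nat \<Rightarrow> nat" where "pv L i = (i + L - 1) mod L"

lemma nx_eq: "i < L \<Longrightarrow> nx L i = (if i + 1 = L then 0 else i + 1)"
  unfolding nx_def by auto

lemma pv_eq: "i < L \<Longrightarrow> pv L i = (if i = 0 then L - 1 else i - 1)"
  unfolding pv_def by (cases i) auto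

lemma nx_lt: "i < L \<Longrightarrow> nx L i < L" by (auto simp: nx_eq)
lemma pv_lt: "i < L \<Longrightarrow> pv L i < L" by (auto simp: pv_eq)
lemma nx_pv: "i < L \<Longrightarrow> nx L (pv L i) = i"
  by (auto simp: pv_eq nx_eq)
lemma pv_nx: "i < L \<Longrightarrow> pv L (nx L i) = i"
  by (auto simp: pv_eq nx_eq)

lemma lap_alt: "i < L \<Longrightarrow> lap L x i = x (pv L i) - 2 * x i + x (nx L i)"
  unfolding lap_def pv_def nx_def by simp

lemma sum_nx: "(\<Sum>i<L. f (nx L i)) = (\<Sum>i<L. f i)"
proof (cases L)
  case 0 then show ?thesis by simp
next
  case (Suc n)
  have "(\<Sum>i<L. f (nx L i)) = (\<Sum>i<n. f (nx L i)) + f (nx L n)" by (simp add: Suc)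
  also have "(\<Sum>i<n. f (nx L i)) = (\<Sum>i<n. f (Suc i))"
    by (rule sum.cong) (auto simp: nx_eq Suc)
  also have "f (nx L n) = f 0" by (simp add: nx_eq Suc)
  also have "(\<Sum>i<n. f (Suc i)) + f 0 = (\<Sum>i<L. f i)"
    unfolding Suc by (subst sum.lessThan_Suc_shift) (simp add: add.commute)
  finally show ?thesis .
qed

lemma sum_pv: "(\<Sum>i<L. f (pv L i)) = (\<Sum>i<L. f i)"
proof (cases L)
  case 0 then show ?thesis by simp
next
  case (Suc n)
  have "(\<Sum>i<L. f (pv L i)) = f (pv L 0) + (\<Sum>i<n. f (pv L (Suc i)))"
    unfolding Suc by (rule sum.lessThan_Suc_shift)
  also have "(\<Sum>i<n. f (pv L (Suc i))) = (\<Sum>i<n. f i)"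
    by (rule sum.cong) (auto simp: pv_eq Suc)
  also have "f (pv L 0) = f n" by (simp add: pv_eq Suc)
  finally show ?thesis unfolding Suc by (simp add: add.commute)
qed

lemma lap_sum0: "(\<Sum>i<L. lap L x i) = 0"
proof -
  have "(\<Sum>i<L. lap L x i) = (\<Sum>i<L. x (pv L i) - 2 * x i + x (nx L i))"
    by (rule sum.cong) (auto simp: lap_alt)
  also have "\<dots> = (\<Sum>i<L. x (pv L i)) - 2 * (\<Sum>i<L. x i) + (\<Sum>i<L. x (nx L i))"
    by (simp add: sum.distrib sum_subtractf sum_distrib_left)
  also have "\<dots> = 0" by (simp add: sum_pv sum_nx)
  finally show ?thesis .
qed

lemma lap_diff: "lap L (\<lambda>i. a i - b i) j = lap L a j - lap L b j"
  unfolding lap_def by (simp add: algebra_simps)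

lemma lap_moment: "int L dvd (\<Sum>i<L. int i * lap L (m::nat\<Rightarrow>int) i)"
proof -
  have "(\<Sum>i<L. int i * lap L m i) = (\<Sum>i<L. int i * m (pv L i)) - 2 * (\<Sum>i<L. int i * m i) + (\<Sum>i<L. int i * m (nx L i))"
    by (simp add: lap_alt sum.distrib sum_subtractf sum_distrib_left algebra_simps)
  also have "(\<Sum>i<L. int i * m (pv L i)) = (\<Sum>j<L. int (nx L j) * m j)"
  proof -
    have "(\<Sum>i<L. int i * m (pv L i)) = (\<Sum>j<L. int (nx L j) * m (pv L (nx L j)))"
      by (rule sum_nx[symmetric])
    also have "\<dots> = (\<Sum>j<L. int (nx L j) * m j)" by (rule sum.cong) (auto simp: pv_nx)
    finally show ?thesis .
  qed
  also have "(\<Sum>i<L. int i * m (nx L i)) = (\<Sum>j<L. int (pv L j) * m j)"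
  proof -
    have "(\<Sum>i<L. int i * m (nx L i)) = (\<Sum>j<L. int (pv L j) * m (nx L (pv L j)))"
      by (rule sum_pv[symmetric])
    also have "\<dots> = (\<Sum>j<L. int (pv L j) * m j)" by (rule sum.cong) (auto simp: nx_pv)
    finally show ?thesis .
  qed
  finally have e: "(\<Sum>i<L. int i * lap L m i) = (\<Sum>j<L. (int (nx L j) + int (pv L j) - 2 * int j) * m j)"
    by (simp add: sum.distrib sum_subtractf sum_distrib_left algebra_simps)
  show ?thesis unfolding e
  proof (rule dvd_sum)
    fix j assume "j \<in> {..<L}"
    then have j: "j < L" by simp
    have "int L dvd (int (nx L j) + int (pv L j) - 2 * int j)"
    proof -
      have "int (nx L j) + int (pv L j) - 2 * int j \<in> {0, int L, - int L}"
        using j by (auto simp: nx_eq pv_eq of_nat_diff)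
      then show ?thesis by auto
    qed
    then show "int L dvd (int (nx L j) + int (pv L j) - 2 * int j) * m j" by simp
  qed
qed



lemma lap_kernel:
  fixes d :: "nat \<Rightarrow> int"
  assumes h: "\<And>i. i < L \<Longrightarrow> lap L d i = 0"
  shows "\<forall>i<L. d i = d 0"
proof -
  define D where "D i = d (nx L i) - d i" for i
  have step: "D i = D (pv L i)" if i: "i < L" for i
  proof -
    have "D (pv L i) = d i - d (pv L i)" using i by (simp add: D_def nx_pv)
    moreover have "lap L d i = d (pv L i) - 2 * d i + d (nx L i)" using i by (rule lap_alt)
    ultimately show ?thesis using h[OF i] by (simp add: D_def)
  qed
  have Dc: "i < L \<Longrightarrow> D i = D 0" for i
  proof (induction i)
    case (Suc k)
    then have "D (Suc k) = D (pv L (Suc k))" using step by blast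
    also have "pv L (Suc k) = k" using Suc.prems by (simp add: pv_eq)
    finally show ?case using Suc by simp
  qed simp
  have "(\<Sum>i<L. D i) = 0"
    unfolding D_def by (simp add: sum_subtractf sum_nx)
  also have "(\<Sum>i<L. D i) = (\<Sum>i<L. D 0)" by (rule sum.cong) (auto intro: Dc)
  finally have "int L * D 0 = 0" by simp
  then have D0: "L > 0 \<Longrightarrow> D 0 = 0" by simp
  show ?thesis
  proof (intro allI impI)
    fix i assume "i < L"
    then show "d i = d 0"
    proof (induction i)
      case (Suc k)
      then have "D k = 0" using Dc D0 by auto
      moreover have "nx L k = Suc k" using Suc.prems by (simp add: nx_eq)
      ultimately show ?case using Suc by (simp add: D_def)
    qed simp
  qed
qed

lemma lap_kernel2:
  fixes m1 m2 :: "nat \<Rightarrow> int"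
  assumes "\<And>i. i < L \<Longrightarrow> lap L m1 i = lap L m2 i"
  shows "\<exists>c. \<forall>i<L. m1 i = m2 i + c"
proof -
  have "lap L (\<lambda>i. m1 i - m2 i) i = 0" if "i < L" for i
    unfolding lap_diff using assms[OF that] by simp
  then have "\<forall>i<L. m1 i - m2 i = m1 0 - m2 0"
    using lap_kernel[of L "\<lambda>i. m1 i - m2 i"] by blast
  then have "\<forall>i<L. m1 i = m2 i + (m1 0 - m2 0)" by (metis add_diff_cancel_left' add_diff_eq diff_add_cancel)
  then show ?thesis by blast
qed

lemma dsum: "(\<Sum>t<n. \<Sum>i\<le>t. (y::nat\<Rightarrow>int) i) = (\<Sum>i<n. (int n - int i) * y i)"
proof (induction n)
  case (Suc n)
  have "(\<Sum>i<Suc n. (int (Suc n) - int i) * y i) = (\<Sum>i<Suc n. (int n - int i) * y i + y i)"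
    by (rule sum.cong) (auto simp: algebra_simps)
  also have "\<dots> = (\<Sum>i<n. (int n - int i) * y i) + (\<Sum>i<Suc n. y i)"
    by (simp add: sum.distrib)
  moreover have "(\<Sum>t<Suc n. \<Sum>i\<le>t. y i) = (\<Sum>t<n. \<Sum>i\<le>t. y i) + (\<Sum>i\<le>n. y i)"
    by (rule sum.lessThan_Suc)
  moreover have "(\<Sum>i<Suc n. y i) = (\<Sum>i\<le>n. y i)" by (simp add: lessThan_Suc_atMost)
  ultimately show ?case using Suc.IH by simp
qed simp

lemma lap_exists:
  fixes y :: "nat \<Rightarrow> int"
  assumes s0: "(\<Sum>i<L. y i) = 0" and dv: "int L dvd (\<Sum>i<L. int i * y i)"
  shows "\<exists>m. \<forall>i<L. lap L m i = y i"
proof -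
  define a where "a = (\<Sum>i<L. int i * y i) div int L"
  have aL: "int L * a = (\<Sum>i<L. int i * y i)" using dv by (simp add: a_def)
  define d where "d j = a + (\<Sum>i\<le>j. y i)" for j
  define m where "m j = (\<Sum>t<j. d t)" for j
  have dsum0: "(\<Sum>t<L. d t) = 0"
  proof -
    have "(\<Sum>t<L. d t) = int L * a + (\<Sum>t<L. \<Sum>i\<le>t. y i)" by (simp add: d_def sum.distrib)
    also have "(\<Sum>t<L. \<Sum>i\<le>t. y i) = (\<Sum>i<L. (int L - int i) * y i)" by (rule dsum)
    also have "\<dots> = int L * (\<Sum>i<L. y i) - (\<Sum>i<L. int i * y i)"
      by (simp add: algebra_simps sum_subtractf sum_distrib_left)
    finally show ?thesis using aL s0 by simp
  qed
  have mnx: "m (nx L i) - m i = d i" if i: "i < L" for i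
  proof (cases "i + 1 = L")
    case True
    then have "nx L i = 0" using i by (simp add: nx_eq)
    moreover have "(\<Sum>t<L. d t) = m i + d i"
    proof -
      have "L = Suc i" using True by simp
      then show ?thesis by (simp add: m_def)
    qed
    ultimately show ?thesis using dsum0 by (simp add: m_def)
  next
    case False
    then show ?thesis using i by (simp add: nx_eq m_def)
  qed
  have dpv: "d i - d (pv L i) = y i" if i: "i < L" for i
  proof (cases i)
    case 0
    then have "pv L i = L - 1" using i by (simp add: pv_eq)
    moreover have "{..L-1} = {..<L}" using i by auto
    ultimately show ?thesis using 0 s0 by (simp add: d_def)
  next
    case (Suc k)
    then show ?thesis using i by (simp add: pv_eq d_def)
  qed
  have "lap L m i = y i" if i: "i < L" for i
  proof -
    have "lap L m i = (m (nx L i) - m i) - (m (nx L (pv L i)) - m (pv L i))"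
      using i by (simp add: lap_alt nx_pv)
    also have "\<dots> = d i - d (pv L i)" using i by (simp add: mnx pv_lt)
    finally show ?thesis using dpv[OF i] by simp
  qed
  then show ?thesis by blast
qed



definition rk :: "(nat \<Rightarrow> real) \<Rightarrow> nat \<Rightarrow> nat \<Rightarrow> nat" where
  "rk w L i = card {j. j < L \<and> w j < w i}"

lemma rk_le_imp: assumes "i < L" "j < L" "rk w L i \<le> rk w L j" shows "w i \<le> w j"
proof (rule ccontr)
  assume "\<not> w i \<le> w j"
  then have "insert j {k. k < L \<and> w k < w j} \<subseteq> {k. k < L \<and> w k < w i}" using assms by auto
  then have "card (insert j {k. k < L \<and> w k < w j}) \<le> rk w L i"
    unfolding rk_def by (intro card_mono) auto
  then have "rk w L j + 1 \<le> rk w L i" unfolding rk_def by simp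
  then show False using assms by simp
qed

lemma rk_lt: assumes "i < L" shows "rk w L i < L"
proof -
  have "{j. j < L \<and> w j < w i} \<subseteq> {..<L} - {i}" by auto
  then have "rk w L i \<le> card ({..<L} - {i})" unfolding rk_def by (intro card_mono) auto
  then show ?thesis using assms by simp
qed

lemma rk_inj: assumes "inj_on w {..<L}" shows "inj_on (rk w L) {..<L}"
proof (rule inj_onI)
  fix i j assume i: "i \<in> {..<L}" and j: "j \<in> {..<L}" and e: "rk w L i = rk w L j"
  then have "w i \<le> w j" "w j \<le> w i" using rk_le_imp[of i L j w] rk_le_imp[of j L i w] by auto
  then have "w i = w j" by simp
  then show "i = j" using assms i j by (auto dest: inj_onD)
qed

lemma rk_image: assumes "inj_on w {..<L}" shows "rk w L ` {..<L} = {..<L}"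
  using rk_lt[of _ L w] rk_inj[OF assms] by (intro endo_inj_surj) auto

lemma rk_card: assumes "inj_on w {..<L}" "n \<le> L"
  shows "card {i. i < L \<and> rk w L i < n} = n"
proof -
  have "rk w L ` {i. i < L \<and> rk w L i < n} = {..<n}"
    using rk_image[OF assms(1)] assms(2) by (auto simp: image_iff)
  moreover have "inj_on (rk w L) {i. i < L \<and> rk w L i < n}"
    using rk_inj[OF assms(1)] by (rule inj_on_subset) auto
  ultimately show ?thesis by (metis card_image card_lessThan)
qed

lemma rk_ex: assumes "inj_on w {..<L}" "n < L" shows "\<exists>a<L. rk w L a = n"
  using rk_image[OF assms(1)] assms(2) by (metis imageE lessThan_iff)

lemma unit_vec:
  fixes u e :: "nat \<Rightarrow> int"
  assumes le: "\<And>i. i < L \<Longrightarrow> u i \<le> e i"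
    and s: "(\<Sum>i<L. u i) = (\<Sum>i<L. e i) - 1"
    and k: "k < L"
    and c: "(\<Sum>i<L. int i * u i) mod int L = (\<Sum>i<L. int i * (e i - (if i = k then 1 else 0))) mod int L"
  shows "\<And>i. i < L \<Longrightarrow> u i = e i - (if i = k then 1 else 0)"
proof -
  define v where "v i = e i - u i" for i
  have v0: "i < L \<Longrightarrow> v i \<ge> 0" for i using le by (simp add: v_def)
  have vs: "(\<Sum>i<L. v i) = 1" using s by (simp add: v_def sum_subtractf)
  obtain j where j: "j < L" "v j > 0"
  proof (rule ccontr)
    assume "\<not> thesis"
    with that have "\<forall>i<L. v i \<le> 0" by (meson not_le)
    then have "(\<Sum>i<L. v i) \<le> 0" by (intro sum_nonpos) auto
    with vs show False by simp
  qed
  have split: "(\<Sum>i<L. v i) = v j + (\<Sum>i\<in>{..<L}-{j}. v i)"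
    using j by (simp add: sum.remove)
  have rest: "(\<Sum>i\<in>{..<L}-{j}. v i) \<ge> 0" using v0 by (intro sum_nonneg) auto
  have vj: "v j = 1" using split rest vs j by linarith
  have r0: "(\<Sum>i\<in>{..<L}-{j}. v i) = 0" using split vs vj by linarith
  have vo: "i < L \<Longrightarrow> i \<noteq> j \<Longrightarrow> v i = 0" for i
    using r0 v0 by (subst (asm) sum_nonneg_eq_0_iff) auto
  have vform: "i < L \<Longrightarrow> v i = (if i = j then 1 else 0)" for i using vo vj by auto
  have iv: "(\<Sum>i<L. int i * v i) = int j"
  proof -
    have "(\<Sum>i<L. int i * v i) = (\<Sum>i<L. (if i = j then int j else 0))"
      by (rule sum.cong) (auto simp: vform)
    also have "\<dots> = int j" using j by simp
    finally show ?thesis .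
  qed
  have ik: "(\<Sum>i<L. int i * (if i = k then 1 else 0)) = int k"
  proof -
    have "(\<Sum>i<L. int i * (if i = k then 1 else 0)) = (\<Sum>i<L. (if i = k then int k else 0))"
      by (rule sum.cong) auto
    also have "\<dots> = int k" using k by simp
    finally show ?thesis .
  qed
  define E where "E = (\<Sum>i<L. int i * e i)"
  have "(\<Sum>i<L. int i * u i) = E - int j"
    using iv by (simp add: E_def v_def algebra_simps sum_subtractf)
  moreover have "(\<Sum>i<L. int i * (e i - (if i = k then 1 else 0))) = E - int k"
    using ik by (simp add: E_def right_diff_distrib sum_subtractf)
  ultimately have "(E - int j) mod int L = (E - int k) mod int L" using c by simp
  then have "int L dvd (E - int j) - (E - int k)" by (simp add: mod_eq_dvd_iff)
  then have d: "int L dvd int k - int j" by simp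
  have "int k - int j = 0"
  proof (rule ccontr)
    assume "int k - int j \<noteq> 0"
    from dvd_imp_le_int[OF this d] j k show False by simp
  qed
  then have jk: "j = k" by simp
  fix i assume "i < L"
  then show "u i = e i - (if i = k then 1 else 0)" using vform[of i] jk by (simp add: v_def)
qed



lemma opt_pos:
  fixes w :: "nat \<Rightarrow> real" and e :: "nat \<Rightarrow> int"
  assumes inj: "inj_on w {..<L}" and wb: "\<And>i. i < L \<Longrightarrow> -1/2 \<le> w i \<and> w i < 1/2"
    and n: "1 \<le> n" "n \<le> L" and k: "k < L"
    and e_def: "\<And>i. e i = (if rk w L i < n then 1 else 0 :: int)"
  shows "\<exists>bnd. (\<forall>i<L. real_of_int (e i - (if i = k then 1 else 0)) + w i \<le> bnd) \<and>
     (\<forall>u. (\<forall>i<L. real_of_int (u i) + w i \<le> bnd) \<longrightarrow> (\<Sum>i<L. u i) = (\<Sum>i<L. e i) - 1 \<longrightarrow>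
        (\<Sum>i<L. int i * u i) mod int L = (\<Sum>i<L. int i * (e i - (if i = k then 1 else 0))) mod int L
        \<longrightarrow> (\<forall>i<L. u i = e i - (if i = k then 1 else 0)))"
proof -
  have "n - 1 < L" using n by simp
  then obtain a where a: "a < L" "rk w L a = n - 1" using rk_ex[OF inj] by blast
  show ?thesis
  proof (intro exI conjI allI impI)
    fix i assume i: "i < L"
    show "real_of_int (e i - (if i = k then 1 else 0)) + w i \<le> 1 + w a"
    proof (cases "rk w L i < n \<and> i \<noteq> k")
      case True
      then have "w i \<le> w a" using rk_le_imp[of i L a w] a i by auto
      then show ?thesis using True by (simp add: e_def)
    next
      case False
      then have "e i - (if i = k then 1 else 0) \<le> 0" by (auto simp: e_def)
      then show ?thesis using wb[OF i] wb[OF a(1)] by linarith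
    qed
  next
    fix u :: "nat \<Rightarrow> int"
    assume ub: "\<forall>i<L. real_of_int (u i) + w i \<le> 1 + w a"
      and s: "(\<Sum>i<L. u i) = (\<Sum>i<L. e i) - 1"
      and c: "(\<Sum>i<L. int i * u i) mod int L = (\<Sum>i<L. int i * (e i - (if i = k then 1 else 0))) mod int L"
    have le: "u i \<le> e i" if i: "i < L" for i
    proof -
      have ui: "real_of_int (u i) + w i \<le> 1 + w a" using ub i by auto
      have "real_of_int (u i) < 2" using ui wb[OF i] wb[OF a(1)] by linarith
      then have "u i < 2" by simp
      moreover have "u i \<le> 0" if "\<not> rk w L i < n"
      proof -
        have "rk w L a \<le> rk w L i" using that a by simp
        then have "w a \<le> w i" using rk_le_imp[of a L i w] a i by auto
        moreover have "a \<noteq> i" using that a n by auto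
        then have "w a \<noteq> w i" using inj_onD[OF inj, of a i] a i by auto
        ultimately have "w a < w i" by simp
        then have "real_of_int (u i) < 1" using ui by linarith
        then show ?thesis by simp
      qed
      ultimately show ?thesis by (auto simp: e_def)
    qed
    fix i assume "i < L"
    then show "u i = e i - (if i = k then 1 else 0)"
      using unit_vec[of L u e k, OF le s k c] by blast
  qed
qed

lemma opt_neg:
  fixes w :: "nat \<Rightarrow> real" and e :: "nat \<Rightarrow> int"
  assumes inj: "inj_on w {..<L}" and wb: "\<And>i. i < L \<Longrightarrow> -1/2 \<le> w i \<and> w i < 1/2"
    and n: "n < L" and k: "k < L"
    and e_def: "\<And>i. e i = (if rk (\<lambda>j. - w j) L i < n then -1 else 0 :: int)"
  shows "\<exists>bnd. (\<forall>i<L. real_of_int (e i - (if i = k then 1 else 0)) + w i \<le> bnd) \<and>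
     (\<forall>u. (\<forall>i<L. real_of_int (u i) + w i \<le> bnd) \<longrightarrow> (\<Sum>i<L. u i) = (\<Sum>i<L. e i) - 1 \<longrightarrow>
        (\<Sum>i<L. int i * u i) mod int L = (\<Sum>i<L. int i * (e i - (if i = k then 1 else 0))) mod int L
        \<longrightarrow> (\<forall>i<L. u i = e i - (if i = k then 1 else 0)))"
proof -
  let ?w = "\<lambda>j. - w j"
  have inj': "inj_on ?w {..<L}" using inj by (auto simp: inj_on_def)
  obtain b where b: "b < L" "rk ?w L b = n" using rk_ex[OF inj' n] by auto
  show ?thesis
  proof (intro exI conjI allI impI)
    fix i assume i: "i < L"
    show "real_of_int (e i - (if i = k then 1 else 0)) + w i \<le> w b"
    proof (cases "rk ?w L i < n")
      case True
      then have "e i - (if i = k then 1 else 0) \<le> -1" by (auto simp: e_def)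
      then show ?thesis using wb[OF i] wb[OF b(1)] by linarith
    next
      case False
      then have "rk ?w L b \<le> rk ?w L i" using b by simp
      then have "- w b \<le> - w i" using rk_le_imp[of b L i ?w] b i by auto
      moreover have "e i - (if i = k then 1 else 0) \<le> 0" using False by (auto simp: e_def)
      ultimately show ?thesis by linarith
    qed
  next
    fix u :: "nat \<Rightarrow> int"
    assume ub: "\<forall>i<L. real_of_int (u i) + w i \<le> w b"
      and s: "(\<Sum>i<L. u i) = (\<Sum>i<L. e i) - 1"
      and c: "(\<Sum>i<L. int i * u i) mod int L = (\<Sum>i<L. int i * (e i - (if i = k then 1 else 0))) mod int L"
    have le: "u i \<le> e i" if i: "i < L" for i
    proof -
      have ui: "real_of_int (u i) + w i \<le> w b" using ub i by auto
      have "real_of_int (u i) < 1" using ui wb[OF i] wb[OF b(1)] by linarith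
      then have "u i < 1" by simp
      moreover have "u i < 0" if "rk ?w L i < n"
      proof -
        have "rk ?w L i \<le> rk ?w L b" using that b by simp
        then have "- w i \<le> - w b" using rk_le_imp[of i L b ?w] b i by auto
        moreover have "b \<noteq> i" using that b by auto
        then have "w b \<noteq> w i" using inj_onD[OF inj, of b i] b i by auto
        ultimately have "w b < w i" by simp
        then have "real_of_int (u i) < 0" using ui by linarith
        then show ?thesis by simp
      qed
      ultimately show ?thesis by (auto simp: e_def)
    qed
    fix i assume "i < L"
    then show "u i = e i - (if i = k then 1 else 0)"
      using unit_vec[of L u e k, OF le s k c] by blast
  qed
qed



lemma comp_meas: "q < L \<Longrightarrow> (\<lambda>\<alpha>. \<alpha> q) \<in> borel_measurable (disorder L)"
proof -
  assume q: "q < L"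
  have "(\<lambda>x. x q) \<in> measurable (PiM {..<L} (\<lambda>_. U)) U"
    using q by (intro measurable_component_singleton) simp
  moreover have "sets U = sets borel" by (simp add: U_def)
  ultimately show ?thesis unfolding disorder_U using measurable_cong_sets[OF refl, of U borel] by blast
qed

lemma lap_meas: "i < L \<Longrightarrow> (\<lambda>\<alpha>. lap L \<alpha> i :: real) \<in> borel_measurable (disorder L)"
proof -
  assume i: "i < L"
  have e: "(\<lambda>\<alpha>. lap L \<alpha> i :: real) = (\<lambda>\<alpha>. \<alpha> (pv L i) - 2 * \<alpha> i + \<alpha> (nx L i))"
    using i by (simp add: lap_alt)
  have [measurable]: "(\<lambda>\<alpha>. \<alpha> (pv L i)) \<in> borel_measurable (disorder L)"
     "(\<lambda>\<alpha>. \<alpha> i) \<in> borel_measurable (disorder L)"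
     "(\<lambda>\<alpha>. \<alpha> (nx L i)) \<in> borel_measurable (disorder L)"
    using i by (auto intro!: comp_meas pv_lt nx_lt)
  show ?thesis unfolding e by measurable
qed

definition coef :: "nat \<Rightarrow> nat \<Rightarrow> nat \<Rightarrow> real" where
  "coef L p q = (if pv L q = p then 1 else 0) - 2 * (if q = p then 1 else 0) + (if nx L q = p then 1 else 0)"

lemma lap_upd: "q < L \<Longrightarrow> lap L (\<alpha>(p := t)) q = lap L \<alpha> q + (t - \<alpha> p) * coef L p q"
  by (simp add: lap_alt coef_def algebra_simps)

lemma null_pair:
  assumes i: "i < L" and j: "j < L" and ij: "i \<noteq> j"
  shows "{\<alpha> \<in> space (disorder L). lap L \<alpha> i - lap L \<alpha> j = (c0::real)} \<in> null_sets (disorder L)"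
proof -
  define c where "c = coef L i i - coef L i j"
  have L2: "2 \<le> L" using i j ij by linarith
  have "pv L i \<noteq> i" using i L2 by (auto simp: pv_eq)
  moreover have "nx L i \<noteq> i" using i L2 by (auto simp: nx_eq)
  ultimately have ci: "coef L i i = -2" by (simp add: coef_def)
  have "coef L i j \<ge> 0" using ij by (simp add: coef_def)
  then have cneg: "c < 0" using ci by (simp add: c_def)
  define h where "h \<alpha> = \<alpha> i - (lap L \<alpha> i - lap L \<alpha> j - c0) / c" for \<alpha> :: "nat \<Rightarrow> real"
  have hinv: "h (\<alpha>(i := t)) = h \<alpha>" for \<alpha> t
    using cneg i j by (simp add: h_def lap_upd c_def field_simps)
  have [measurable]: "(\<lambda>\<alpha>. lap L \<alpha> i :: real) \<in> borel_measurable (disorder L)"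
    "(\<lambda>\<alpha>. lap L \<alpha> j :: real) \<in> borel_measurable (disorder L)"
    "(\<lambda>\<alpha>. \<alpha> i) \<in> borel_measurable (disorder L)"
    using i j by (auto intro: lap_meas comp_meas)
  have hm: "h \<in> borel_measurable (disorder L)" unfolding h_def by measurable
  have "{\<alpha> \<in> space (disorder L). lap L \<alpha> i - lap L \<alpha> j = c0} = {\<alpha> \<in> space (disorder L). \<alpha> i = h \<alpha>}"
    using cneg by (auto simp: h_def)
  then show ?thesis using null_coord[OF i hm hinv] by simp
qed

lemma AE_inj:
  "AE \<alpha> in disorder L. inj_on (omega L \<alpha>) {..<L}"
proof -
  define N where "N = (\<lambda>(i::nat, j::nat, n::int). if i < L \<and> j < L \<and> i \<noteq> j then
      {\<alpha> \<in> space (disorder L). lap L \<alpha> i - lap L \<alpha> j = real_of_int n} else {})"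
  have "(\<Union>x. N x) \<in> null_sets (disorder L)"
    by (rule null_sets_UN) (auto simp: N_def intro: null_pair)
  moreover have "{\<alpha> \<in> space (disorder L). \<not> inj_on (omega L \<alpha>) {..<L}} \<subseteq> (\<Union>x. N x)"
  proof
    fix \<alpha> assume a: "\<alpha> \<in> {\<alpha> \<in> space (disorder L). \<not> inj_on (omega L \<alpha>) {..<L}}"
    then obtain i j where ij: "i < L" "j < L" "i \<noteq> j" "omega L \<alpha> i = omega L \<alpha> j"
      by (auto simp: inj_on_def)
    then have "lap L \<alpha> i - lap L \<alpha> j = real_of_int (rnd L \<alpha> i - rnd L \<alpha> j)"
      by (simp add: omega_def)
    then have "\<alpha> \<in> N (i, j, rnd L \<alpha> i - rnd L \<alpha> j)" using a ij by (simp add: N_def)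
    then show "\<alpha> \<in> (\<Union>x. N x)" by blast
  qed
  ultimately show ?thesis by (rule AE_I')
qed



lemma maxz_alt: "maxz L \<alpha> m = Max (zcoord L \<alpha> m ` {..<L})"
  unfolding maxz_def by (rule arg_cong[where f=Max]) auto

lemma zle_maxz: "i < L \<Longrightarrow> zcoord L \<alpha> m i \<le> maxz L \<alpha> m"
  unfolding maxz_alt by (rule Max_ge) auto

lemma maxz_le: "0 < L \<Longrightarrow> (\<And>i. i < L \<Longrightarrow> zcoord L \<alpha> m i \<le> b) \<Longrightarrow> maxz L \<alpha> m \<le> b"
  unfolding maxz_alt by (rule Max.boundedI) auto

lemma maxz_cong: "(\<And>i. i < L \<Longrightarrow> lap L m1 i = lap L m2 i) \<Longrightarrow> maxz L \<alpha> m1 = maxz L \<alpha> m2"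
  unfolding maxz_alt zcoord_def by (rule arg_cong[where f=Max]) auto

lemma omega_bounds: "-1/2 \<le> omega L \<alpha> i \<and> omega L \<alpha> i < 1/2"
  unfolding omega_def rnd_def
  using of_int_round_le[of "lap L \<alpha> i"] of_int_round_gt[of "lap L \<alpha> i"] by linarith

lemma main_det:
  fixes L :: nat and \<alpha> :: "nat \<Rightarrow> real"
  assumes L: "0 < L" and inj: "inj_on (omega L \<alpha>) {..<L}"
  shows "(\<exists>m. threshold_config L \<alpha> m)
         \<and> (\<forall>m1 m2. threshold_config L \<alpha> m1 \<and> threshold_config L \<alpha> m2 \<longrightarrow>
               (\<exists>c::int. \<forall>i<L. m1 i = m2 i + c))
         \<and> (\<forall>m. threshold_config L \<alpha> m \<longrightarrow>
               (\<forall>i<L. lap L m i = - rnd L \<alpha> i + Jvec L \<alpha> i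
                                  - (if int i = kplus L \<alpha> then 1 else 0)))"
proof -
  define w where "w = omega L \<alpha>"
  define r where "r = rnd L \<alpha>"
  define S where "S = Ssum L \<alpha>"
  define J where "J = Jvec L \<alpha>"
  define k where "k = nat (kplus L \<alpha>)"
  have wb: "\<And>i. -1/2 \<le> w i \<and> w i < 1/2" unfolding w_def by (rule omega_bounds)
  have inj': "inj_on w {..<L}" using inj by (simp add: w_def)
  have lapa: "lap L \<alpha> i = real_of_int (r i) + w i" for i by (simp add: w_def r_def omega_def)
  have "(\<Sum>i<L. lap L \<alpha> i) = 0" by (rule lap_sum0)
  then have sw: "(\<Sum>i<L. w i) = - real_of_int S"
    by (simp add: lapa sum.distrib S_def Ssum_def r_def)
  have "(\<Sum>i<L. w i) \<ge> (\<Sum>i<L. -1/2)" using wb by (intro sum_mono) auto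
  then have Sb1: "2 * S \<le> int L" using sw by simp
  have "(\<Sum>i<L. w i) < (\<Sum>i<L. 1/2)" using wb L by (intro sum_strict_mono) auto
  then have Sb2: "- 2 * S < int L" using sw by simp
  have kp: "0 \<le> kplus L \<alpha>" "kplus L \<alpha> < int L" using L by (auto simp: kplus_def)
  have k: "k < L" using kp by (simp add: k_def)
  have ik: "(int i = kplus L \<alpha>) = (i = k)" for i using kp by (auto simp: k_def)
  define us where "us i = J i - (if i = k then 1 else 0)" for i
  have key: "(\<Sum>i<L. us i) = S \<and> (\<exists>bnd. (\<forall>i<L. real_of_int (us i) + w i \<le> bnd) \<and>
     (\<forall>u. (\<forall>i<L. real_of_int (u i) + w i \<le> bnd) \<longrightarrow> (\<Sum>i<L. u i) = S \<longrightarrow>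
        (\<Sum>i<L. int i * u i) mod int L = (\<Sum>i<L. int i * us i) mod int L
        \<longrightarrow> (\<forall>i<L. u i = us i)))"
  proof (cases "S \<ge> 0")
    case True
    define n where "n = nat (S + 1)"
    have n: "1 \<le> n" "n \<le> L" using True Sb1 L by (auto simp: n_def)
    define e where "e = (\<lambda>i. if rk w L i < n then 1 else 0 :: int)"
    have Je: "J i = e i" for i
      using True by (simp add: J_def Jvec_def e_def rk_def S_def n_def w_def zless_nat_eq_int_zless)
    have se: "(\<Sum>i<L. e i) = int n"
    proof -
      have "(\<Sum>i<L. e i) = (\<Sum>i\<in>{i. i < L \<and> rk w L i < n}. 1)"
        unfolding e_def by (rule sum.mono_neutral_cong_right) auto
      also have "\<dots> = int n" using rk_card[OF inj' n(2)] by simp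
      finally show ?thesis .
    qed
    have usx: "us = (\<lambda>i. e i - (if i = k then 1 else 0))" by (auto simp: us_def Je)
    have sus: "(\<Sum>i<L. us i) = S"
      using k by (simp add: usx sum_subtractf se n_def True)
    have "S = (\<Sum>i<L. e i) - 1" using se True by (simp add: n_def)
    then have sE: "S = (\<Sum>i<L. e i) - 1" .
    have ee: "\<And>i. e i = (if rk w L i < n then 1 else 0)" by (simp add: e_def)
    obtain bnd where b1: "\<forall>i<L. real_of_int (e i - (if i = k then 1 else 0)) + w i \<le> bnd"
      and b2: "\<forall>u. (\<forall>i<L. real_of_int (u i) + w i \<le> bnd) \<longrightarrow> (\<Sum>i<L. u i) = (\<Sum>i<L. e i) - 1 \<longrightarrow> (\<Sum>i<L. int i * u i) mod int L = (\<Sum>i<L. int i * (e i - (if i = k then 1 else 0))) mod int L \<longrightarrow> (\<forall>i<L. u i = e i - (if i = k then 1 else 0))"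
      using opt_pos[OF inj' wb n k ee] by blast
    show ?thesis unfolding sE[symmetric] usx using sus b1 b2 unfolding usx sE[symmetric] by blast
  next
    case False
    define n where "n = nat (- S - 1)"
    have n: "n < L" using False Sb2 by (auto simp: n_def)
    define e where "e = (\<lambda>i. if rk (\<lambda>j. - w j) L i < n then -1 else 0 :: int)"
    have setq: "{j. j < L \<and> w i < w j} = {j. j < L \<and> - w j < - w i}" for i by auto
    have Je: "J i = e i" for i
      using False by (simp add: J_def Jvec_def e_def rk_def S_def n_def w_def[symmetric] zless_nat_eq_int_zless)
    have se: "(\<Sum>i<L. e i) = - int n"
    proof -
      have "(\<Sum>i<L. e i) = (\<Sum>i\<in>{i. i < L \<and> rk (\<lambda>j. - w j) L i < n}. -1)"
        unfolding e_def by (rule sum.mono_neutral_cong_right) auto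
      also have "\<dots> = - int n" using rk_card[of "\<lambda>j. - w j" L n] inj' n
        by (simp add: inj_on_def)
      finally show ?thesis .
    qed
    have usx: "us = (\<lambda>i. e i - (if i = k then 1 else 0))" by (auto simp: us_def Je)
    have sus: "(\<Sum>i<L. us i) = S"
      using k False by (simp add: usx sum_subtractf se n_def)
    have "S = (\<Sum>i<L. e i) - 1" using se False by (simp add: n_def)
    then have sE: "S = (\<Sum>i<L. e i) - 1" .
    have ee: "\<And>i. e i = (if rk (\<lambda>j. - w j) L i < n then -1 else 0)" by (simp add: e_def)
    obtain bnd where b1: "\<forall>i<L. real_of_int (e i - (if i = k then 1 else 0)) + w i \<le> bnd"
      and b2: "\<forall>u. (\<forall>i<L. real_of_int (u i) + w i \<le> bnd) \<longrightarrow> (\<Sum>i<L. u i) = (\<Sum>i<L. e i) - 1 \<longrightarrow> (\<Sum>i<L. int i * u i) mod int L = (\<Sum>i<L. int i * (e i - (if i = k then 1 else 0))) mod int L \<longrightarrow> (\<forall>i<L. u i = e i - (if i = k then 1 else 0))"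
      using opt_neg[OF inj' wb n k ee] by blast
    show ?thesis unfolding sE[symmetric] usx using sus b1 b2 unfolding usx sE[symmetric] by blast
  qed
  then obtain bnd where sus: "(\<Sum>i<L. us i) = S"
    and bus: "\<And>i. i < L \<Longrightarrow> real_of_int (us i) + w i \<le> bnd"
    and uniq: "\<And>u. (\<forall>i<L. real_of_int (u i) + w i \<le> bnd) \<Longrightarrow> (\<Sum>i<L. u i) = S \<Longrightarrow>
        (\<Sum>i<L. int i * u i) mod int L = (\<Sum>i<L. int i * us i) mod int L \<Longrightarrow> (\<forall>i<L. u i = us i)"
    by blast
  have sr: "S = (\<Sum>i<L. r i)" by (simp add: S_def Ssum_def r_def)
  have kk: "int k = (\<Sum>i<L. int i * (- r i + J i)) mod int L"
    using kp by (simp add: k_def kplus_def J_def r_def)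
  have ius: "(\<Sum>i<L. int i * us i) = (\<Sum>i<L. int i * J i) - int k"
  proof -
    have "(\<Sum>i<L. int i * us i) = (\<Sum>i<L. int i * J i - (if i = k then int k else 0))"
      by (rule sum.cong) (auto simp: us_def algebra_simps)
    also have "\<dots> = (\<Sum>i<L. int i * J i) - int k" using k by (simp add: sum_subtractf)
    finally show ?thesis .
  qed
  have cong_us: "(\<Sum>i<L. int i * us i) mod int L = (\<Sum>i<L. int i * r i) mod int L"
  proof -
    have "(\<Sum>i<L. int i * us i) mod int L
        = ((\<Sum>i<L. int i * J i) - (\<Sum>i<L. int i * (- r i + J i)) mod int L) mod int L"
      by (simp add: ius kk)
    also have "\<dots> = ((\<Sum>i<L. int i * J i) - (\<Sum>i<L. int i * (- r i + J i))) mod int L"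
      by (rule mod_diff_right_eq)
    also have "(\<Sum>i<L. int i * J i) - (\<Sum>i<L. int i * (- r i + J i)) = (\<Sum>i<L. int i * r i)"
      by (simp add: algebra_simps sum.distrib sum_subtractf)
    finally show ?thesis .
  qed
  define y where "y i = us i - r i" for i
  have ys: "(\<Sum>i<L. y i) = 0" using sus sr by (simp add: y_def sum_subtractf)
  have yd: "int L dvd (\<Sum>i<L. int i * y i)"
  proof -
    have "(\<Sum>i<L. int i * y i) = (\<Sum>i<L. int i * us i) - (\<Sum>i<L. int i * r i)"
      by (simp add: y_def algebra_simps sum_subtractf)
    then show ?thesis using cong_us by (simp add: mod_eq_dvd_iff)
  qed
  obtain ms where ms: "\<forall>i<L. lap L ms i = y i" using lap_exists[OF ys yd] by blast
  have zc: "zcoord L \<alpha> m i = real_of_int (lap L m i + r i) + w i" for m i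
    by (simp add: zcoord_def lapa)
  have forced: "\<forall>i<L. lap L m i = y i" if mb: "maxz L \<alpha> m \<le> bnd" for m
  proof -
    define u where "u i = lap L m i + r i" for i
    have ub: "\<forall>i<L. real_of_int (u i) + w i \<le> bnd"
      using zle_maxz[of _ L \<alpha> m] mb zc by (auto simp: u_def) (smt (verit))
    have usum: "(\<Sum>i<L. u i) = S" using lap_sum0[of L m] sr by (simp add: u_def sum.distrib)
    have "(\<Sum>i<L. int i * u i) = (\<Sum>i<L. int i * lap L m i) + (\<Sum>i<L. int i * r i)"
      by (simp add: u_def algebra_simps sum.distrib)
    then have "(\<Sum>i<L. int i * u i) mod int L = (\<Sum>i<L. int i * r i) mod int L"
      using lap_moment[of L m] by (auto simp: mod_eq_dvd_iff)
    then have uc: "(\<Sum>i<L. int i * u i) mod int L = (\<Sum>i<L. int i * us i) mod int L"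
      using cong_us by simp
    have "\<forall>i<L. u i = us i" using uniq[OF ub usum uc] .
    then show ?thesis by (simp add: u_def y_def eq_diff_eq)
  qed
  have msb: "maxz L \<alpha> ms \<le> bnd"
  proof (rule maxz_le[OF L])
    fix i assume i: "i < L"
    then show "zcoord L \<alpha> ms i \<le> bnd" using bus[OF i] ms by (simp add: zc y_def)
  qed
  have thr: "threshold_config L \<alpha> ms"
    unfolding threshold_config_def
  proof
    fix m'
    show "maxz L \<alpha> ms \<le> maxz L \<alpha> m'"
    proof (rule ccontr)
      assume nt: "\<not> maxz L \<alpha> ms \<le> maxz L \<alpha> m'"
      then have "maxz L \<alpha> m' \<le> bnd" using msb by simp
      then have "\<forall>i<L. lap L m' i = y i" by (rule forced)
      then have "maxz L \<alpha> m' = maxz L \<alpha> ms" using ms by (intro maxz_cong) simp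
      then show False using nt by simp
    qed
  qed
  have thlap: "\<forall>i<L. lap L m i = y i" if "threshold_config L \<alpha> m" for m
  proof -
    have "maxz L \<alpha> m \<le> maxz L \<alpha> ms" using that by (simp add: threshold_config_def)
    then show ?thesis using msb forced by simp
  qed
  show ?thesis
  proof (intro conjI allI impI)
    show "\<exists>m. threshold_config L \<alpha> m" using thr by blast
  next
    fix m1 m2 assume "threshold_config L \<alpha> m1 \<and> threshold_config L \<alpha> m2"
    then have "\<And>i. i < L \<Longrightarrow> lap L m1 i = lap L m2 i" using thlap by simp
    then show "\<exists>c. \<forall>i<L. m1 i = m2 i + c" by (rule lap_kernel2)
  next
    fix m i assume "threshold_config L \<alpha> m" "i < L"
    then have "lap L m i = y i" using thlap by simp
    then show "lap L m i = - rnd L \<alpha> i + Jvec L \<alpha> i - (if int i = kplus L \<alpha> then 1 else 0)"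
      by (simp add: y_def us_def ik r_def J_def)
  qed
qed

theorem theorem1:
  fixes L :: nat
  assumes "0 < L"
  shows "AE \<alpha> in disorder L.
           (\<exists>m. threshold_config L \<alpha> m)
         \<and> (\<forall>m1 m2. threshold_config L \<alpha> m1 \<and> threshold_config L \<alpha> m2 \<longrightarrow>
               (\<exists>c::int. \<forall>i<L. m1 i = m2 i + c))
         \<and> (\<forall>m. threshold_config L \<alpha> m \<longrightarrow>
               (\<forall>i<L. lap L m i = - rnd L \<alpha> i + Jvec L \<alpha> i
                                  - (if int i = kplus L \<alpha> then 1 else 0)))"
  using AE_inj[of L] by (rule eventually_mono) (rule main_det[OF assms])

end
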